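(* Let $\mathcal{D}\subset\mathbb{R}^n$ be a direction set and $\mathcal{D}^W\subset\mathcal{D}$ a grid direction set of width $W$ with directional resolution $d\theta<\pi/2$. Then for any smooth function $u:\mathbb{R}^n\to\mathbb{R}$ and point $x$, $$\lambda^h_{\mathcal{D}^W}u(x)-\lambda_{\mathcal{D}}u(x)=O\big((Wh)^2+d\theta\big).$$
   Context: A direction set $\mathcal{D}\subset\mathbb{R}^n$ spans $\mathbb{R}^n$, is symmetric ($d\in\mathcal{D}\Rightarrow-d\in\mathcal{D}$) and $0\notin\mathcal{D}$. A grid direction set $\mathcal{D}^W$ is a direction set consisting of vectors in $\mathbb{Z}^n$; its width $W$ is $\max_{v\in\mathcal{D}^W}\|v\|_\infty$. For smooth $u$, $\lambda_{\mathcal{D}}u(x)=\inf_{v\in\mathcal{D}}\frac{v^\intercal D^2u(x)v}{|v|^2}$. For $h>0$ and $v\in\mathcal{D}^W$, $D^h_{vv}u(x)=\frac{u(x+hv)-2u(x)+u(x-hv)}{h^2\|v\|^2}$, and $\lambda^h_{\mathcal{D}^W}u(x)=\min_{v\in\mathcal{D}^W}D^h_{vv}u(x)$. The directional resolution of $\mathcal{D}^W$ with respect to $\mathcal{D}$ is $d\theta=\max_{w\in\mathcal{D}}\min_{v\in\mathcal{D}^W}\cos^{-1}(\hat w^\intercal\hat v)$, where $\hat w=w/|w|$, $\hat v=v/|v|$ (the largest angle between a vector of $\mathcal{D}$ and its best approximation in $\mathcal{D}^W$). *)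

theory Defs
  imports "HOL-Analysis.Analysis"
begin

text \<open>Smoothness (C-infinity): there is a family of higher derivatives
  Dk k y [v1,...,vk] (the k-th Frechet derivative at y applied to v1..vk) such that
  the 0-th one is u and each one is Frechet differentiable with derivative the next one.\<close>
definition smooth_fun :: "('a::euclidean_space \<Rightarrow> real) \<Rightarrow> bool" where
  "smooth_fun u \<longleftrightarrow> (\<exists>Dk :: nat \<Rightarrow> 'a \<Rightarrow> 'a list \<Rightarrow> real.
      (\<forall>y. Dk 0 y [] = u y) \<and>
      (\<forall>k y vs. length vs = k \<longrightarrow>
          ((\<lambda>z. Dk k z vs) has_derivative (\<lambda>w. Dk (Suc k) y (w # vs))) (at y)))"

definition hess_form :: "('a::euclidean_space \<Rightarrow> real) \<Rightarrow> 'a \<Rightarrow> 'a \<Rightarrow> real" where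
  "hess_form u x v = frechet_derivative (\<lambda>y. frechet_derivative u (at y) v) (at x) v"

definition direction_set :: "'a::euclidean_space set \<Rightarrow> bool" where
  "direction_set D \<longleftrightarrow> span D = UNIV \<and> (\<forall>d\<in>D. - d \<in> D) \<and> 0 \<notin> D"

definition grid_direction_set :: "(real^'n) set \<Rightarrow> bool" where
  "grid_direction_set DW \<longleftrightarrow> direction_set DW \<and> finite DW \<and>
      (\<forall>v\<in>DW. \<forall>i. v $ i \<in> \<int>)"

definition grid_width :: "(real^'n) set \<Rightarrow> real" where
  "grid_width DW = Max (infnorm ` DW)"

definition lambda_D :: "'a::euclidean_space set \<Rightarrow> ('a \<Rightarrow> real) \<Rightarrow> 'a \<Rightarrow> real" where
  "lambda_D D u x = (INF v\<in>D. hess_form u x v / (norm v)^2)"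

definition second_diff :: "real \<Rightarrow> 'a::euclidean_space \<Rightarrow> ('a \<Rightarrow> real) \<Rightarrow> 'a \<Rightarrow> real" where
  "second_diff h v u x = (u (x + h *\<^sub>R v) - 2 * u x + u (x - h *\<^sub>R v)) / (h^2 * (norm v)^2)"

definition lambda_h :: "'a::euclidean_space set \<Rightarrow> real \<Rightarrow> ('a \<Rightarrow> real) \<Rightarrow> 'a \<Rightarrow> real" where
  "lambda_h DW h u x = Min ((\<lambda>v. second_diff h v u x) ` DW)"

definition dir_resolution :: "'a::euclidean_space set \<Rightarrow> 'a set \<Rightarrow> real" where
  "dir_resolution D DW =
     (SUP w\<in>D. INF v\<in>DW. arccos ((w /\<^sub>R norm w) \<bullet> (v /\<^sub>R norm v)))"

end

theory Submission
  imports Defs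
begin


lemma multilin:
  fixes Dk :: "nat \<Rightarrow> 'a::euclidean_space \<Rightarrow> 'a list \<Rightarrow> real"
  assumes Dd: "\<And>k y vs. length vs = k \<Longrightarrow> ((\<lambda>z. Dk k z vs) has_derivative (\<lambda>w. Dk (Suc k) y (w # vs))) (at y)"
  shows "length pre + length post + 1 = k \<Longrightarrow> linear (\<lambda>w. Dk k y (pre @ w # post))"
proof (induction k arbitrary: y pre post)
  case 0 then show ?case by simp
next
  case (Suc k)
  show ?case
  proof (cases pre)
    case Nil
    then have "length post = k" using Suc.prems by simp
    from has_derivative_bounded_linear[OF Dd[OF this, of y]]
    show ?thesis using Nil by (simp add: bounded_linear.linear)
  next
    case (Cons a pre')
    have len: "length pre' + length post + 1 = k" using Suc.prems Cons by simp
    have L: "\<And>z. linear (\<lambda>w. Dk k z (pre' @ w # post))" using Suc.IH[OF len] .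
    have dd: "\<And>w z. ((\<lambda>z. Dk k z (pre' @ w # post)) has_derivative (\<lambda>b. Dk (Suc k) z (b # pre' @ w # post))) (at z)"
      using Dd len by simp
    show ?thesis unfolding Cons
    proof (rule linearI)
      fix w1 w2
      have eq: "(\<lambda>z. Dk k z (pre' @ (w1+w2) # post)) = (\<lambda>z. Dk k z (pre' @ w1 # post) + Dk k z (pre' @ w2 # post))"
        using linear_add[OF L] by (simp add: fun_eq_iff)
      have "((\<lambda>z. Dk k z (pre' @ (w1+w2) # post)) has_derivative (\<lambda>b. Dk (Suc k) y (b # pre' @ w1 # post) + Dk (Suc k) y (b # pre' @ w2 # post))) (at y)"
        unfolding eq by (intro has_derivative_add dd)
      from fun_cong[OF has_derivative_unique[OF dd this], of a]
      show "Dk (Suc k) y ((a # pre') @ (w1+w2) # post) = Dk (Suc k) y ((a # pre') @ w1 # post) + Dk (Suc k) y ((a # pre') @ w2 # post)"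
        by simp
    next
      fix r w
      have eq: "(\<lambda>z. Dk k z (pre' @ (r *\<^sub>R w) # post)) = (\<lambda>z. r * Dk k z (pre' @ w # post))"
        using linear_scale[OF L] by (simp add: fun_eq_iff)
      have "((\<lambda>z. Dk k z (pre' @ (r *\<^sub>R w) # post)) has_derivative (\<lambda>b. r * Dk (Suc k) y (b # pre' @ w # post))) (at y)"
        unfolding eq by (intro has_derivative_mult_right dd)
      from fun_cong[OF has_derivative_unique[OF dd this], of a]
      show "Dk (Suc k) y ((a # pre') @ (r *\<^sub>R w) # post) = r *\<^sub>R Dk (Suc k) y ((a # pre') @ w # post)"
        by simp
    qed
  qed
qed

lemma lin_bound:
  fixes f :: "'a::euclidean_space \<Rightarrow> real"
  assumes "linear f"
  shows "\<bar>f w\<bar> \<le> norm w * (\<Sum>b\<in>Basis. \<bar>f b\<bar>)"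
proof -
  have "f w = f (\<Sum>b\<in>Basis. (w \<bullet> b) *\<^sub>R b)" by (simp add: euclidean_representation)
  also have "\<dots> = (\<Sum>b\<in>Basis. (w \<bullet> b) * f b)"
    by (simp add: linear_sum[OF assms] linear_scale[OF assms])
  finally have "\<bar>f w\<bar> \<le> (\<Sum>b\<in>Basis. \<bar>w \<bullet> b\<bar> * \<bar>f b\<bar>)"
    by (metis (no_types, lifting) abs_mult sum.cong sum_abs)
  also have "\<dots> \<le> (\<Sum>b\<in>Basis. norm w * \<bar>f b\<bar>)"
    by (intro sum_mono mult_right_mono Basis_le_norm) auto
  finally show ?thesis by (simp add: sum_distrib_left)
qed



lemma taylor_sd:
  fixes Dk :: "nat \<Rightarrow> 'a::euclidean_space \<Rightarrow> 'a list \<Rightarrow> real"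
  assumes D0: "\<And>y. Dk 0 y [] = u y"
  and Dd: "\<And>k y vs. length vs = k \<Longrightarrow> ((\<lambda>z. Dk k z vs) has_derivative (\<lambda>w. Dk (Suc k) y (w # vs))) (at y)"
  and v: "v \<noteq> 0" and h: "h > 0"
  and K: "\<And>y. y \<in> cball x R \<Longrightarrow> \<bar>Dk 4 y [v,v,v,v]\<bar> \<le> K"
  and hv: "h * norm v \<le> R"
  shows "\<bar>second_diff h v u x - Dk 2 x [v,v] / (norm v)^2\<bar> \<le> K * h^2 / (12 * (norm v)^2)"
proof -
  define g where "g m t = Dk m (x + t *\<^sub>R v) (replicate m v)" for m t
  have der: "DERIV (g m) t :> g (Suc m) t" for m t
  proof -
    have lin: "linear (\<lambda>w. Dk (Suc m) (x + t*\<^sub>R v) ([] @ w # replicate m v))"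
      by (rule multilin[where Dk=Dk, OF Dd]) simp_all
    have f: "((\<lambda>t. x + t *\<^sub>R v) has_derivative (\<lambda>s. s *\<^sub>R v)) (at t)"
      by (auto intro!: derivative_eq_intros)
    have "((\<lambda>t. Dk m (x + t*\<^sub>R v) (replicate m v)) has_derivative (\<lambda>s. Dk (Suc m) (x + t*\<^sub>R v) ((s*\<^sub>R v) # replicate m v))) (at t)"
      using has_derivative_compose[OF f Dd[of "replicate m v" m "x + t*\<^sub>R v"]] by simp
    moreover have "(\<lambda>s. Dk (Suc m) (x + t*\<^sub>R v) ((s*\<^sub>R v) # replicate m v)) = (*) (g (Suc m) t)"
      using linear_scale[OF lin] by (auto simp: fun_eq_iff g_def mult.commute)
    ultimately show ?thesis unfolding has_field_derivative_def g_def by simp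
  qed
  have g0: "g 0 = (\<lambda>t. u (x + t *\<^sub>R v))" by (simp add: g_def D0 fun_eq_iff)
  have T: "\<exists>t. (if s < 0 then s < t \<and> t < 0 else 0 < t \<and> t < s) \<and>
         u (x + s *\<^sub>R v) = (\<Sum>m<4. g m 0 / fact m * (s - 0) ^ m) + g 4 t / fact 4 * (s - 0) ^ 4"
    if "s = h \<or> s = -h" for s
    using Taylor[of 4 g "\<lambda>t. u (x + t *\<^sub>R v)" "-h" h 0 s] der g0 that h by auto
  obtain t1 where t1: "0 < t1" "t1 < h"
    and e1: "u (x + h *\<^sub>R v) = (\<Sum>m<4. g m 0 / fact m * h ^ m) + g 4 t1 / 24 * h ^ 4"
    using T[of h] h by (auto simp: fact_numeral)
  obtain t2 where t2: "-h < t2" "t2 < 0"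
    and e2: "u (x + (-h) *\<^sub>R v) = (\<Sum>m<4. g m 0 / fact m * (-h) ^ m) + g 4 t2 / 24 * (-h) ^ 4"
    using T[of "-h"] h by (auto simp: fact_numeral)
  have s4: "(\<Sum>m<4. f m) = f 0 + f 1 + f 2 + f 3" for f :: "nat \<Rightarrow> real"
    by (simp add: numeral_eq_Suc lessThan_Suc)
  have gx: "g 0 0 = u x" "g 2 0 = Dk 2 x [v,v]" by (simp_all add: g_def D0 numeral_eq_Suc)
  have main: "u (x + h *\<^sub>R v) - 2 * u x + u (x - h *\<^sub>R v) = Dk 2 x [v,v] * h^2 + (g 4 t1 + g 4 t2) / 24 * h^4"
    using e1 e2 gx unfolding s4 by (simp add: algebra_simps fact_numeral power2_eq_square power4_eq_xxxx add_divide_distrib)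
  have gb: "\<bar>g 4 t\<bar> \<le> K" if "\<bar>t\<bar> \<le> h" for t
  proof -
    have "dist x (x + t *\<^sub>R v) = \<bar>t\<bar> * norm v" by (simp add: dist_norm)
    also have "\<dots> \<le> h * norm v" using that by (simp add: mult_right_mono)
    finally have "x + t *\<^sub>R v \<in> cball x R" using hv by simp
    then show ?thesis using K by (simp add: g_def numeral_eq_Suc)
  qed
  have nv: "norm v > 0" using v by simp
  have "second_diff h v u x - Dk 2 x [v,v] / (norm v)^2 = (g 4 t1 + g 4 t2) * h^2 / (24 * (norm v)^2)"
    unfolding second_diff_def main using h nv by (simp add: field_simps power2_eq_square power4_eq_xxxx)
  also have "\<bar>\<dots>\<bar> \<le> (2*K) * h^2 / (24 * (norm v)^2)"
  proof -
    have "\<bar>g 4 t1 + g 4 t2\<bar> \<le> 2*K" using gb[of t1] gb[of t2] t1 t2 by auto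
    then have "\<bar>g 4 t1 + g 4 t2\<bar> * h^2 \<le> (2*K) * h^2" by (simp add: mult_right_mono)
    then have "\<bar>g 4 t1 + g 4 t2\<bar> * h^2 / (24 * (norm v)^2) \<le> (2*K) * h^2 / (24 * (norm v)^2)"
      by (rule divide_right_mono) simp
    then show ?thesis by (simp add: abs_mult)
  qed
  finally show ?thesis by simp
qed



lemma bound4:
  fixes Dk :: "nat \<Rightarrow> 'a::euclidean_space \<Rightarrow> 'a list \<Rightarrow> real"
  assumes Dd: "\<And>k y vs. length vs = k \<Longrightarrow> ((\<lambda>z. Dk k z vs) has_derivative (\<lambda>w. Dk (Suc k) y (w # vs))) (at y)"
  shows "\<bar>Dk 4 y [v,v,v,v]\<bar> \<le> norm v ^ 4 *
     (\<Sum>b1\<in>Basis. \<Sum>b2\<in>Basis. \<Sum>b3\<in>Basis. \<Sum>b4\<in>Basis. \<bar>Dk 4 y [b1,b2,b3,b4]\<bar>)"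
proof -
  have L: "linear (\<lambda>w. Dk 4 y (pre @ w # post))" if "length pre + length post + 1 = 4" for pre post
    by (rule multilin[where Dk=Dk, OF Dd]) (use that in auto)
  have l1: "\<bar>Dk 4 y [v,v,v,v]\<bar> \<le> norm v * (\<Sum>b1\<in>Basis. \<bar>Dk 4 y [b1,v,v,v]\<bar>)"
    using lin_bound[OF L[of "[]" "[v,v,v]"]] by simp
  have l2: "\<bar>Dk 4 y [b1,v,v,v]\<bar> \<le> norm v * (\<Sum>b2\<in>Basis. \<bar>Dk 4 y [b1,b2,v,v]\<bar>)" for b1
    using lin_bound[OF L[of "[b1]" "[v,v]"]] by simp
  have l3: "\<bar>Dk 4 y [b1,b2,v,v]\<bar> \<le> norm v * (\<Sum>b3\<in>Basis. \<bar>Dk 4 y [b1,b2,b3,v]\<bar>)" for b1 b2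
    using lin_bound[OF L[of "[b1,b2]" "[v]"]] by simp
  have l4: "\<bar>Dk 4 y [b1,b2,b3,v]\<bar> \<le> norm v * (\<Sum>b4\<in>Basis. \<bar>Dk 4 y [b1,b2,b3,b4]\<bar>)" for b1 b2 b3
    using lin_bound[OF L[of "[b1,b2,b3]" "[]"]] by simp
  have "\<bar>Dk 4 y [b1,b2,v,v]\<bar> \<le> norm v * (\<Sum>b3\<in>Basis. norm v * (\<Sum>b4\<in>Basis. \<bar>Dk 4 y [b1,b2,b3,b4]\<bar>))" for b1 b2
    using l3[of b1 b2] l4[of b1 b2] by (meson order_trans mult_left_mono norm_ge_zero sum_mono)
  then have m3: "\<bar>Dk 4 y [b1,b2,v,v]\<bar> \<le> norm v^2 * (\<Sum>b3\<in>Basis. \<Sum>b4\<in>Basis. \<bar>Dk 4 y [b1,b2,b3,b4]\<bar>)" for b1 b2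
    by (simp add: sum_distrib_left power2_eq_square mult.assoc)
  have "\<bar>Dk 4 y [b1,v,v,v]\<bar> \<le> norm v * (\<Sum>b2\<in>Basis. norm v^2 * (\<Sum>b3\<in>Basis. \<Sum>b4\<in>Basis. \<bar>Dk 4 y [b1,b2,b3,b4]\<bar>))" for b1
    using l2[of b1] m3[of b1] by (meson order_trans mult_left_mono norm_ge_zero sum_mono)
  then have m2: "\<bar>Dk 4 y [b1,v,v,v]\<bar> \<le> norm v^3 * (\<Sum>b2\<in>Basis. \<Sum>b3\<in>Basis. \<Sum>b4\<in>Basis. \<bar>Dk 4 y [b1,b2,b3,b4]\<bar>)" for b1
    by (simp add: sum_distrib_left power3_eq_cube power2_eq_square mult.assoc)
  have "\<bar>Dk 4 y [v,v,v,v]\<bar> \<le> norm v * (\<Sum>b1\<in>Basis. norm v^3 * (\<Sum>b2\<in>Basis. \<Sum>b3\<in>Basis. \<Sum>b4\<in>Basis. \<bar>Dk 4 y [b1,b2,b3,b4]\<bar>))"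
    using l1 m2 by (meson order_trans mult_left_mono norm_ge_zero sum_mono)
  then show ?thesis
    by (simp add: sum_distrib_left power4_eq_xxxx power3_eq_cube mult.assoc)
qed

lemma bound2:
  fixes Dk :: "nat \<Rightarrow> 'a::euclidean_space \<Rightarrow> 'a list \<Rightarrow> real"
  assumes Dd: "\<And>k y vs. length vs = k \<Longrightarrow> ((\<lambda>z. Dk k z vs) has_derivative (\<lambda>w. Dk (Suc k) y (w # vs))) (at y)"
  shows "\<bar>Dk 2 y [p,q]\<bar> \<le> norm p * norm q * (\<Sum>b1\<in>Basis. \<Sum>b2\<in>Basis. \<bar>Dk 2 y [b1,b2]\<bar>)"
proof -
  have L: "linear (\<lambda>w. Dk 2 y (pre @ w # post))" if "length pre + length post + 1 = 2" for pre post
    by (rule multilin[where Dk=Dk, OF Dd]) (use that in auto)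
  have l1: "\<bar>Dk 2 y [p,q]\<bar> \<le> norm p * (\<Sum>b1\<in>Basis. \<bar>Dk 2 y [b1,q]\<bar>)"
    using lin_bound[OF L[of "[]" "[q]"]] by simp
  have l2: "\<bar>Dk 2 y [b1,q]\<bar> \<le> norm q * (\<Sum>b2\<in>Basis. \<bar>Dk 2 y [b1,b2]\<bar>)" for b1
    using lin_bound[OF L[of "[b1]" "[]"]] by simp
  have "\<bar>Dk 2 y [p,q]\<bar> \<le> norm p * (\<Sum>b1\<in>Basis. norm q * (\<Sum>b2\<in>Basis. \<bar>Dk 2 y [b1,b2]\<bar>))"
    using l1 l2 by (meson order_trans mult_left_mono norm_ge_zero sum_mono)
  then show ?thesis by (simp add: sum_distrib_left mult.assoc)
qed

lemma quad_lip:
  fixes Dk :: "nat \<Rightarrow> 'a::euclidean_space \<Rightarrow> 'a list \<Rightarrow> real"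
  assumes Dd: "\<And>k y vs. length vs = k \<Longrightarrow> ((\<lambda>z. Dk k z vs) has_derivative (\<lambda>w. Dk (Suc k) y (w # vs))) (at y)"
  and "norm a = 1" "norm b = 1"
  shows "\<bar>Dk 2 y [a,a] - Dk 2 y [b,b]\<bar> \<le> 2 * norm (a - b) * (\<Sum>b1\<in>Basis. \<Sum>b2\<in>Basis. \<bar>Dk 2 y [b1,b2]\<bar>)"
proof -
  have L: "linear (\<lambda>w. Dk 2 y (pre @ w # post))" if "length pre + length post + 1 = 2" for pre post
    by (rule multilin[where Dk=Dk, OF Dd]) (use that in auto)
  have e1: "Dk 2 y [a,a] - Dk 2 y [b,a] = Dk 2 y [a-b,a]"
    using linear_diff[OF L[of "[]" "[a]"]] by simp
  have e2: "Dk 2 y [b,a] - Dk 2 y [b,b] = Dk 2 y [b,a-b]"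
    using linear_diff[OF L[of "[b]" "[]"]] by simp
  have "\<bar>Dk 2 y [a,a] - Dk 2 y [b,b]\<bar> \<le> \<bar>Dk 2 y [a-b,a]\<bar> + \<bar>Dk 2 y [b,a-b]\<bar>"
    using e1 e2 by linarith
  also have "\<dots> \<le> norm (a-b) * norm a * (\<Sum>b1\<in>Basis. \<Sum>b2\<in>Basis. \<bar>Dk 2 y [b1,b2]\<bar>)
      + norm b * norm (a-b) * (\<Sum>b1\<in>Basis. \<Sum>b2\<in>Basis. \<bar>Dk 2 y [b1,b2]\<bar>)"
    by (intro add_mono bound2[where Dk=Dk, OF Dd])
  finally show ?thesis using assms by (simp add: algebra_simps)
qed

lemma quad_scale:
  fixes Dk :: "nat \<Rightarrow> 'a::euclidean_space \<Rightarrow> 'a list \<Rightarrow> real"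
  assumes Dd: "\<And>k y vs. length vs = k \<Longrightarrow> ((\<lambda>z. Dk k z vs) has_derivative (\<lambda>w. Dk (Suc k) y (w # vs))) (at y)"
  shows "Dk 2 y [c *\<^sub>R v, c *\<^sub>R v] = c * c * Dk 2 y [v,v]"
proof -
  have L: "linear (\<lambda>w. Dk 2 y (pre @ w # post))" if "length pre + length post + 1 = 2" for pre post
    by (rule multilin[where Dk=Dk, OF Dd]) (use that in auto)
  show ?thesis
    using linear_scale[OF L[of "[]" "[c *\<^sub>R v]"], of c v] linear_scale[OF L[of "[v]" "[]"], of c v] by simp
qed

lemma hess_eq:
  fixes Dk :: "nat \<Rightarrow> 'a::euclidean_space \<Rightarrow> 'a list \<Rightarrow> real"
  assumes D0: "\<And>y. Dk 0 y [] = u y"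
  and Dd: "\<And>k y vs. length vs = k \<Longrightarrow> ((\<lambda>z. Dk k z vs) has_derivative (\<lambda>w. Dk (Suc k) y (w # vs))) (at y)"
  shows "hess_form u x v = Dk 2 x [v,v]"
proof -
  have "u = (\<lambda>z. Dk 0 z [])" using D0 by (simp add: fun_eq_iff)
  then have "frechet_derivative u (at y) = (\<lambda>w. Dk 1 y [w])" for y
    using frechet_derivative_at[OF Dd[of "[]" 0 y]] by simp
  then have "(\<lambda>y. frechet_derivative u (at y) v) = (\<lambda>y. Dk 1 y [v])" by simp
  moreover have "frechet_derivative (\<lambda>y. Dk 1 y [v]) (at x) = (\<lambda>w. Dk 2 x [w,v])"
    using frechet_derivative_at[OF Dd[of "[v]" 1 x]] by (simp add: numeral_2_eq_2)
  ultimately show ?thesis unfolding hess_form_def by simp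
qed

lemma arc_bound:
  fixes a b :: "'a::euclidean_space"
  assumes "norm a = 1" "norm b = 1"
  shows "norm (a - b) \<le> arccos (a \<bullet> b)"
proof -
  have cs: "\<bar>a \<bullet> b\<bar> \<le> 1" using Cauchy_Schwarz_ineq2[of a b] assms by simp
  define t where "t = arccos (a \<bullet> b)"
  have t0: "t \<ge> 0" unfolding t_def using cs by (intro arccos_lbound) auto
  have ct: "cos t = a \<bullet> b" unfolding t_def using cs by (intro cos_arccos) auto
  have "norm (a - b)^2 = 2 - 2 * (a \<bullet> b)"
  proof -
    have "a \<bullet> a = 1" "b \<bullet> b = 1" using assms by (simp_all add: norm_eq_1)
    then show ?thesis by (simp add: power2_norm_eq_inner inner_diff_left inner_diff_right inner_commute)
  qed
  also have "\<dots> = 4 * (sin (t/2))^2"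
    using cos_double_sin[of "t/2"] ct by simp
  also have "\<dots> \<le> 4 * (t/2)^2"
    using abs_sin_x_le_abs_x[of "t/2"] unfolding abs_le_square_iff by simp
  also have "\<dots> = t^2" by (simp add: power2_eq_square)
  finally show ?thesis using t0 unfolding t_def[symmetric] by (simp add: power2_le_iff_abs_le)
qed



lemma min_pert:
  fixes f g :: "'a \<Rightarrow> real"
  assumes "finite S" "S \<noteq> {}" "\<And>v. v \<in> S \<Longrightarrow> \<bar>f v - g v\<bar> \<le> E"
  shows "\<bar>Min (f ` S) - Min (g ` S)\<bar> \<le> E"
proof -
  obtain a where a: "a \<in> S" "Min (f ` S) = f a" using Min_in[of "f ` S"] assms by (metis (no_types) finite_imageI image_iff image_is_empty)
  obtain b where b: "b \<in> S" "Min (g ` S) = g b" using Min_in[of "g ` S"] assms by (metis (no_types) finite_imageI image_iff image_is_empty)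
  have "Min (f ` S) \<le> f b" "Min (g ` S) \<le> g a"
    using Min_le[OF finite_imageI[OF assms(1)] imageI[OF b(1)], of f] Min_le[OF finite_imageI[OF assms(1)] imageI[OF a(1)], of g] by auto
  then show ?thesis using assms(3)[OF a(1)] assms(3)[OF b(1)] a b by linarith
qed

theorem mainTheorem10:
  fixes u :: "real^'n \<Rightarrow> real" and x :: "real^'n"
  assumes "smooth_fun u"
  shows "\<exists>C \<delta>. \<delta> > 0 \<and>
    (\<forall>D DW h. direction_set D \<longrightarrow> grid_direction_set DW \<longrightarrow> DW \<subseteq> D \<longrightarrow>
       dir_resolution D DW < pi / 2 \<longrightarrow> 0 < h \<longrightarrow> grid_width DW * h \<le> \<delta> \<longrightarrow>
       \<bar>lambda_h DW h u x - lambda_D D u x\<bar>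
         \<le> C * ((grid_width DW * h)^2 + dir_resolution D DW))"
proof -
  obtain Dk :: "nat \<Rightarrow> real^'n \<Rightarrow> (real^'n) list \<Rightarrow> real" where D0: "\<And>y. Dk 0 y [] = u y"
    and Dd: "\<And>k y vs. length vs = k \<Longrightarrow> ((\<lambda>z. Dk k z vs) has_derivative (\<lambda>w. Dk (Suc k) y (w # vs))) (at y)"
    using assms unfolding smooth_fun_def by blast
  define S4 where "S4 y = (\<Sum>b1\<in>Basis. \<Sum>b2\<in>Basis. \<Sum>b3\<in>Basis. \<Sum>b4\<in>Basis. \<bar>Dk 4 y [b1,b2,b3,b4]\<bar>)" for y
  define B2 where "B2 = (\<Sum>b1\<in>Basis. \<Sum>b2\<in>Basis. \<bar>Dk 2 x [b1,b2]\<bar>)"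
  define N where "N = real DIM(real^'n)"
  define R where "R = sqrt N"
  have N0: "N \<ge> 0" by (simp add: N_def)
  have R0: "R \<ge> 0" by (simp add: R_def N_def)
  have RN: "R^2 = N" by (simp add: R_def N_def)
  have B20: "B2 \<ge> 0" unfolding B2_def by (intro sum_nonneg) auto
  have contD: "continuous_on UNIV (\<lambda>y. Dk k y vs)" if "length vs = k" for k vs
    using has_derivative_continuous[OF Dd[OF that]] continuous_at_imp_continuous_on by blast
  have contS: "continuous_on UNIV S4"
    unfolding S4_def by (intro continuous_intros contD) simp
  obtain M where M: "\<forall>y\<in>cball x R. norm (S4 y) \<le> M"
    using compact_imp_bounded[OF compact_continuous_image[OF continuous_on_subset[OF contS] compact_cball]]
    unfolding bounded_iff by blast
  define M0 where "M0 = max M 0"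
  have M00: "M0 \<ge> 0" by (simp add: M0_def)
  have MS: "S4 y \<le> M0" if "y \<in> cball x R" for y
    using M that unfolding M0_def by force
  define Q where "Q v = hess_form u x v / (norm v)^2" for v
  have Qeq: "Q v = Dk 2 x [v,v] / (norm v)^2" for v
    unfolding Q_def using hess_eq[where Dk=Dk, OF D0 Dd] by simp
  have Qn: "Q v = Dk 2 x [v /\<^sub>R norm v, v /\<^sub>R norm v]" if "v \<noteq> 0" for v
  proof -
    have "Dk 2 x [inverse (norm v) *\<^sub>R v, inverse (norm v) *\<^sub>R v] = inverse (norm v) * inverse (norm v) * Dk 2 x [v,v]"
      by (rule quad_scale[where Dk=Dk, OF Dd])
    then show ?thesis unfolding Qeq using that by (simp add: power2_eq_square divide_inverse mult.commute)
  qed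
  have Qb: "\<bar>Q v\<bar> \<le> B2" for v
  proof (cases "v = 0")
    case True then show ?thesis by (simp add: Qeq B20)
  next
    case False
    have "\<bar>Dk 2 x [v,v]\<bar> \<le> norm v * norm v * B2" unfolding B2_def by (rule bound2[where Dk=Dk, OF Dd])
    then show ?thesis using False unfolding Qeq by (simp add: abs_divide power2_eq_square divide_le_eq mult.commute)
  qed
  have Qlip: "\<bar>Q w - Q v\<bar> \<le> 2 * B2 * arccos ((w /\<^sub>R norm w) \<bullet> (v /\<^sub>R norm v))" if "w \<noteq> 0" "v \<noteq> 0" for w v
  proof -
    have n1: "norm (w /\<^sub>R norm w) = 1" "norm (v /\<^sub>R norm v) = 1" using that by simp_all
    have "\<bar>Q w - Q v\<bar> \<le> 2 * norm (w /\<^sub>R norm w - v /\<^sub>R norm v) * B2"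
      unfolding Qn[OF that(1)] Qn[OF that(2)] B2_def by (rule quad_lip[where Dk=Dk, OF Dd n1])
    also have "\<dots> \<le> 2 * arccos ((w /\<^sub>R norm w) \<bullet> (v /\<^sub>R norm v)) * B2"
      using arc_bound[OF n1] B20 by (intro mult_right_mono) auto
    finally show ?thesis by (simp add: algebra_simps)
  qed
  define C where "C = M0 * N / 12 + 2 * B2"
  have key: "\<bar>lambda_h DW h u x - lambda_D D u x\<bar> \<le> C * ((grid_width DW * h)^2 + dir_resolution D DW)"
    if dD: "direction_set D" and gW: "grid_direction_set DW" and sub: "DW \<subseteq> D"
      and h: "0 < h" and Wh: "grid_width DW * h \<le> 1"
    for D DW :: "(real^'n) set" and h :: real
  proof -
    define W where "W = grid_width DW"
    define dt where "dt = dir_resolution D DW"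
    have nz: "\<exists>z::real^'n. z \<noteq> 0" using nonempty_Basis nonzero_Basis by blast
    have dWs: "direction_set DW" and fin: "finite DW" using gW unfolding grid_direction_set_def by auto
    have ne: "S \<noteq> {}" if "direction_set (S::(real^'n) set)" for S
    proof
      assume "S = {}"
      then have "(UNIV::(real^'n) set) = {0}" using that unfolding direction_set_def by simp
      then show False using nz by auto
    qed
    have neD: "D \<noteq> {}" and neW: "DW \<noteq> {}" using ne dD dWs by auto
    have nzD: "0 \<notin> D" using dD unfolding direction_set_def by auto
    have nzW: "0 \<notin> DW" using nzD sub by auto
    have infW: "infnorm v \<le> W" if "v \<in> DW" for v
      unfolding W_def grid_width_def using fin that by (intro Max_ge) auto
    have W0: "W \<ge> 0" using infW[of "SOME v. v \<in> DW"] neW infnorm_pos_le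
      by (metis order_trans some_in_eq)
    have nv: "norm v \<le> R * W" if "v \<in> DW" for v
      using norm_le_infnorm[of v] infW[OF that] R0 unfolding R_def N_def
      by (meson mult_left_mono order_trans real_sqrt_ge_zero)
    define E where "E = M0 * N / 12 * (W * h)^2"
    have sdb: "\<bar>second_diff h v u x - Q v\<bar> \<le> E" if "v \<in> DW" for v
    proof -
      have v0: "v \<noteq> 0" using nzW that by auto
      have hv: "h * norm v \<le> R"
      proof -
        have "h * norm v \<le> h * (R * W)" using nv[OF that] h by simp
        also have "\<dots> = R * (W * h)" by simp
        also have "\<dots> \<le> R * 1" using Wh R0 unfolding W_def by (intro mult_left_mono) auto
        finally show ?thesis by simp
      qed
      have K: "\<bar>Dk 4 y [v,v,v,v]\<bar> \<le> M0 * norm v ^ 4" if "y \<in> cball x R" for y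
      proof -
        have "\<bar>Dk 4 y [v,v,v,v]\<bar> \<le> norm v ^ 4 * S4 y" unfolding S4_def by (rule bound4[where Dk=Dk, OF Dd])
        also have "\<dots> \<le> norm v ^ 4 * M0" using MS[OF that] by (intro mult_left_mono) auto
        finally show ?thesis by (simp add: mult.commute)
      qed
      have "\<bar>second_diff h v u x - Dk 2 x [v,v] / (norm v)^2\<bar> \<le> M0 * norm v ^ 4 * h^2 / (12 * (norm v)^2)"
        by (rule taylor_sd[where Dk=Dk, OF D0 Dd v0 h K hv])
      also have "\<dots> = M0 / 12 * (norm v)^2 * h^2" using v0 by (simp add: field_simps power2_eq_square power4_eq_xxxx)
      also have "\<dots> \<le> M0 / 12 * (R * W)^2 * h^2"
        using nv[OF that] M00 by (intro mult_right_mono mult_left_mono power_mono) auto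
      also have "\<dots> = E" unfolding E_def using RN by (simp add: power_mult_distrib)
      finally show ?thesis unfolding Qeq .
    qed
    define L where "L = Min (Q ` DW)"
    have hL: "\<bar>lambda_h DW h u x - L\<bar> \<le> E"
      unfolding lambda_h_def L_def by (rule min_pert[OF fin neW sdb])
    have lD: "lambda_D D u x = (INF v\<in>D. Q v)" unfolding lambda_D_def Q_def ..
    have bb: "bdd_below (Q ` D)" using Qb by (intro bdd_belowI[of _ "-B2"]) (smt (verit) imageE)
    define th where "th w = (INF v\<in>DW. arccos ((w /\<^sub>R norm w) \<bullet> (v /\<^sub>R norm v)))" for w
    have thv: "\<exists>v\<in>DW. th w = arccos ((w /\<^sub>R norm w) \<bullet> (v /\<^sub>R norm v))" for w
    proof -
      have "th w = Min ((\<lambda>v. arccos ((w /\<^sub>R norm w) \<bullet> (v /\<^sub>R norm v))) ` DW)"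
        unfolding th_def using fin neW by (simp add: cInf_eq_Min)
      moreover have "Min ((\<lambda>v. arccos ((w /\<^sub>R norm w) \<bullet> (v /\<^sub>R norm v))) ` DW) \<in> (\<lambda>v. arccos ((w /\<^sub>R norm w) \<bullet> (v /\<^sub>R norm v))) ` DW"
        using fin neW by (intro Min_in) auto
      ultimately show ?thesis by auto
    qed
    have rng: "\<bar>(w /\<^sub>R norm w) \<bullet> (v /\<^sub>R norm v)\<bar> \<le> 1" if "w \<noteq> 0" "v \<noteq> 0" for w v :: "real^'n"
      using Cauchy_Schwarz_ineq2[of "w /\<^sub>R norm w" "v /\<^sub>R norm v"] that by simp
    have thr: "0 \<le> th w \<and> th w \<le> pi" if "w \<in> D" for w
    proof -
      obtain v where v: "v \<in> DW" "th w = arccos ((w /\<^sub>R norm w) \<bullet> (v /\<^sub>R norm v))" using thv by blast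
      have "w \<noteq> 0" "v \<noteq> 0" using that v nzD nzW by auto
      from rng[OF this] show ?thesis unfolding v(2) by (auto intro: arccos_lbound arccos_ubound)
    qed
    have bdt: "bdd_above (th ` D)" using thr by (intro bdd_aboveI[of _ pi]) auto
    have thdt: "th w \<le> dt" if "w \<in> D" for w
      unfolding dt_def dir_resolution_def th_def[symmetric] by (rule cSUP_upper[OF that bdt])
    have dt0: "dt \<ge> 0" using neD thr thdt by (meson ex_in_conv order_trans)
    obtain v0 where v0: "v0 \<in> DW" "L = Q v0" unfolding L_def using Min_in[of "Q ` DW"] fin neW by (metis (no_types) finite_imageI image_iff image_is_empty)
    have up: "lambda_D D u x \<le> L" unfolding lD v0(2) using sub v0(1) by (intro cINF_lower[OF bb]) auto
    have lo: "L - 2 * B2 * dt \<le> lambda_D D u x" unfolding lD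
    proof (rule cINF_greatest[OF neD])
      fix w assume w: "w \<in> D"
      obtain v where v: "v \<in> DW" "th w = arccos ((w /\<^sub>R norm w) \<bullet> (v /\<^sub>R norm v))" using thv by blast
      have "w \<noteq> 0" "v \<noteq> 0" using w v nzD nzW by auto
      from Qlip[OF this] v(2) have "Q v \<le> Q w + 2 * B2 * th w" by (simp add: abs_le_iff)
      moreover have "2 * B2 * th w \<le> 2 * B2 * dt" using thdt[OF w] B20 by (intro mult_left_mono) auto
      moreover have "L \<le> Q v" unfolding L_def using fin v(1) by (intro Min_le) auto
      ultimately show "L - 2 * B2 * dt \<le> Q w" by linarith
    qed
    have tot: "\<bar>lambda_h DW h u x - lambda_D D u x\<bar> \<le> E + 2 * B2 * dt" using hL up lo by linarith
    have ex: "0 \<le> 2 * B2 * (W*h)^2 + M0 * N / 12 * dt" using B20 M00 N0 dt0 by simp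
    have "E + 2 * B2 * dt + (2 * B2 * (W*h)^2 + M0 * N / 12 * dt) = (M0 * N / 12 + 2 * B2) * ((W * h)^2 + dt)"
      unfolding E_def by (simp add: algebra_simps)
    then show ?thesis
      using tot ex unfolding W_def dt_def C_def by linarith
  qed
  show ?thesis using key by (intro exI[of _ C] exI[of _ 1]) auto
qed


end
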